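(* Let $x,y\in[-2^l,2^l]$ be integers and let $\llbracket x\rrbracket,\llbracket y\rrbracket$ be FastPai encryptions of $x,y$ held by $S_0$. Run protocol $\mathtt{SCMP}_{\mathrm{HSS}}$: (i) $S_0$ picks integers $r_1\in\{1,\dots,2^\sigma-1\}$ and $r_2$ with $r_2\le N/2$ and $r_1+r_2>N/2$, and a bit $\pi\in\{0,1\}$. If $\pi=0$ it sets $D=(\llbracket x\rrbracket\cdot\llbracket y\rrbracket^{-1}\cdot\llbracket 1\rrbracket)^{r_1}\bmod N^2$, else $D=(\llbracket y\rrbracket\cdot\llbracket x\rrbracket^{-1})^{r_1}\bmod N^2$. It computes $z_0=\mathrm{DDLog}_N(D^{\langle 2\alpha\rangle_0}\bmod N^2)-r_2$ and sends $(D,z_0)$ to $S_1$. (ii) $S_1$ computes $z_1=\mathrm{DDLog}_N(D^{\langle 2\alpha\rangle_1}\bmod N^2)$ and $d=z_1-z_0\bmod N\in[0,N)$; it sets $\llbracket\mu_0\rrbracket=\llbracket 0\rrbracket$ if $d>N/2$ and $\llbracket\mu_0\rrbracket=\llbracket 1\rrbracket$ if $d\le N/2$, and sends $\llbracket\mu_0\rrbracket$ to $S_0$. (iii) If $\pi=0$, $S_0$ sets $\llbracket\mu\rrbracket=\llbracket\mu_0\rrbracket$, else $\llbracket\mu\rrbracket=\llbracket 1\rrbracket\cdot\llbracket\mu_0\rrbracket^{-1}\bmod N^2$; finally it sets $\llbracket\mu\rrbracket\leftarrow\llbracket\mu\rrbracket\cdot\llbracket 0\rrbracket\bmod N^2$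 and outputs it. Then the output $\llbracket\mu\rrbracket$ is an encryption of $0$ if $x\ge y$ and an encryption of $1$ if $x<y$ (i.e. $\mathrm{Dec}(\llbracket\mu\rrbracket)=0$ if $x\ge y$ and $=1$ if $x<y$).
   Context: FastPai: for a security parameter $\kappa$, $l(\kappa)=4\kappa$. $N=PQ$ with $P,Q$ primes of $n(\kappa)/2$ bits, $p,q$ odd primes of $l(\kappa)/2$ bits, $p\mid P-1$, $q\mid Q-1$, $P\equiv Q\equiv3\pmod4$, $\gcd(P-1,Q-1)=2$, $\gcd(pq,(P-1)(Q-1)/(4pq))=1$. Private key $\alpha=pq$ (an $l(\kappa)$-bit number); $\beta=(P-1)(Q-1)/(4pq)$; $h=-y_0^{2\beta}\bmod N$ for random $y_0\in\mathbb{Z}_N^*$; public key $(N,h)$. $\mathrm{Enc}(m)=(1+N)^m(h^r\bmod N)^N\bmod N^2$, $r$ uniform in $\{0,1\}^{l(\kappa)}$, written $\llbracket m\rrbracket$; $\mathrm{Dec}(c)=L(c^{2\alpha}\bmod N^2)(2\alpha)^{-1}\bmod N$, $L(u)=(u-1)/N$. Negative integers $m$ are encoded as $N-|m|$. Ciphertext inverses and exponentiations are in $\mathbb{Z}_{N^2}^*$. $\mathrm{DDLog}_N(g)=\lfloor g/N\rfloor\cdot(g\bmod N)^{-1}\bmod N$ for $g\in[0,N^2)$ with $g\bmod N$ invertible mod $N$. $\langle 2\alpha\rangle_0,\langle 2\alpha\rangle_1$ are integers held by $S_0$, $S_1$ respectively with $\langle 2\alpha\rangle_1-\langle 2\alpha\rangle_0=2\alpha$;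 $\llbracket 0\rrbracket,\llbracket 1\rrbracket$ are encryptions of $0,1$ known to both servers. $\sigma$ is a parameter (e.g. $\sigma=128$). Standing parameter assumption: $N/2>2^{l+1+\sigma+l(\kappa)+1}+2^{\sigma+l(\kappa)+1}$ (the paper's parameters, e.g. $|N|=3072$, $l(\kappa)=512$, $\sigma=128$, $l=32$, satisfy this). *)

theory Defs
  imports Main "HOL-Number_Theory.Modular_Inverse"
begin

definition zpow_mod :: "int \<Rightarrow> int \<Rightarrow> int \<Rightarrow> int" where
  "zpow_mod M a e = (if e \<ge> 0 then a ^ nat e mod M
                     else (modular_inverse M a) ^ nat (- e) mod M)"

text \<open>FastPai encryption with explicit randomness r; the message m is
  an element of Z_N (negative integers are encoded as their residue mod N).\<close>
definition fp_enc :: "int \<Rightarrow> int \<Rightarrow> int \<Rightarrow> int \<Rightarrow> int" where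
  "fp_enc N h m r = ((1 + N) ^ nat (m mod N) * ((h ^ nat r) mod N) ^ nat N) mod (N^2)"

definition fp_L :: "int \<Rightarrow> int \<Rightarrow> int" where
  "fp_L N u = (u - 1) div N"

definition fp_dec :: "int \<Rightarrow> int \<Rightarrow> int \<Rightarrow> int" where
  "fp_dec N alpha c =
     (fp_L N (c ^ nat (2 * alpha) mod (N^2)) * modular_inverse N (2 * alpha)) mod N"

definition DDLog :: "int \<Rightarrow> int \<Rightarrow> int" where
  "DDLog N g = ((g div N) * modular_inverse N (g mod N)) mod N"

text \<open>Inputs: N, the public encryptions c0 = [[0]], c1 = [[1]],
  the shares s0 (of S_0) and s1 (of S_1), the ciphertexts cx, cy, and S_0's
  random choices r1, r2, pi (pi in {0,1}).\<close>
definition scmp_hss ::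
  "int \<Rightarrow> int \<Rightarrow> int \<Rightarrow> int \<Rightarrow> int \<Rightarrow> int \<Rightarrow> int \<Rightarrow> nat \<Rightarrow> int \<Rightarrow> nat \<Rightarrow> int" where
  "scmp_hss N c0 c1 s0 s1 cx cy r1 r2 pi =
    (let N2 = N^2;
         \<comment> \<open>step (i), server S_0\<close>
         D = (if pi = 0
              then ((cx * modular_inverse N2 cy mod N2) * c1 mod N2) ^ r1 mod N2
              else (cy * modular_inverse N2 cx mod N2) ^ r1 mod N2);
         z0 = DDLog N (zpow_mod N2 D s0) - r2;
         \<comment> \<open>step (ii), server S_1\<close>
         z1 = DDLog N (zpow_mod N2 D s1);
         d = (z1 - z0) mod N;
         mu0 = (if 2 * d > N then c0 else c1);
         \<comment> \<open>step (iii), server S_0\<close>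
         mu = (if pi = 0 then mu0 else (c1 * modular_inverse N2 mu0) mod N2)
     in (mu * c0) mod N2)"

end

theory Submission
  imports Defs "HOL-Number_Theory.Number_Theory"
begin

lemma pow_lin:
  fixes k N :: int
  shows "[(1 + k*N)^j = 1 + int j*k*N] (mod N^2)"
proof (induction j)
  case 0 then show ?case by simp
next
  case (Suc j)
  have "[(1 + k*N)^j * (1 + k*N) = (1 + int j*k*N) * (1 + k*N)] (mod N^2)"
    using Suc by (rule cong_mult) (rule cong_refl)
  then have "[(1 + k*N)^Suc j = (1 + int j*k*N) * (1 + k*N)] (mod N^2)"
    by (simp only: power_Suc mult.commute)
  moreover have "(1 + int j*k*N) * (1 + k*N) = (1 + int (Suc j)*k*N) + (int j*k*k) * N^2"
    by (simp add: algebra_simps power2_eq_square)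
  moreover have "[(1 + int (Suc j)*k*N) + (int j*k*k) * N^2 = 1 + int (Suc j)*k*N] (mod N^2)"
    unfolding cong_iff_dvd_diff by simp
  ultimately show ?case using cong_trans by metis
qed

lemma pow_N_one:
  fixes w N :: int
  assumes "[w = 1] (mod N)" "N > 0"
  shows "[w^nat N = 1] (mod N^2)"
proof -
  have "N dvd w - 1" using assms(1) by (simp add: cong_iff_dvd_diff)
  then obtain k where k: "w - 1 = N * k" by (auto simp: dvd_def)
  hence k': "w = 1 + k*N" by (simp add: algebra_simps)
  have "[w^nat N = 1 + int (nat N)*k*N] (mod N^2)" unfolding k' by (rule pow_lin)
  moreover have "1 + int (nat N)*k*N = 1 + k * N^2" using assms(2) by (simp add: power2_eq_square)
  moreover have "[1 + k * N^2 = 1] (mod N^2)" unfolding cong_iff_dvd_diff by simp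
  ultimately show ?thesis using cong_trans by metis
qed

lemma fermat_int:
  fixes P y :: int
  assumes "prime P" "coprime y P"
  shows "[y ^ nat (P - 1) = 1] (mod P)"
proof -
  have P1: "P > 1" using assms(1) prime_gt_1_int by blast
  have "residues P" unfolding residues_def using P1 by simp
  from residues.euler_theorem[OF this assms(2)]
  have "[y ^ totient (nat P) = 1] (mod P)" .
  moreover have "totient (nat P) = nat P - 1"
  proof (rule totient_prime)
    have "int (nat P) = P" using P1 by simp
    thus "prime (nat P)" using assms(1) prime_int_nat_transfer by metis
  qed
  moreover have "nat P - 1 = nat (P - 1)" by simp
  ultimately show ?thesis by metis
qed

definition Gc :: "int \<Rightarrow> nat \<Rightarrow> int \<Rightarrow> int \<Rightarrow> bool" where
  "Gc N a c m \<longleftrightarrow> (\<exists>w. coprime w N \<and> [w^a = 1] (mod N) \<and> [c = (1 + m*N) * w^nat N] (mod N^2))"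

lemma cong_sq_to_N:
  fixes a b N :: int
  assumes "[a = b] (mod N^2)"
  shows "[a = b] (mod N)"
  using assms by (metis cong_dvd_modulus dvd_triv_left power2_eq_square)

lemma Gc_coprime:
  assumes "Gc N a c m" "N > 1"
  shows "coprime c N"
proof -
  obtain w where w: "coprime w N" "[c = (1 + m*N) * w^nat N] (mod N^2)"
    using assms(1) unfolding Gc_def by blast
  have c1: "coprime (1 + m*N) N"
    by (metis add.commute coprime_add_one_left coprime_commute coprime_mult_right_iff mult.commute)
  have "coprime ((1 + m*N) * w^nat N) N" using c1 w(1) by simp
  moreover have "[c = (1 + m*N) * w^nat N] (mod N)" using cong_sq_to_N w(2) .
  ultimately show ?thesis using cong_imp_coprime cong_sym by blast
qed

lemma Gc_coprime2:
  assumes "Gc N a c m" "N > 1"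
  shows "coprime c (N^2)"
  using Gc_coprime[OF assms] by simp

lemma Gc_mod:
  assumes "Gc N a c m"
  shows "Gc N a (c mod N^2) m"
  using assms unfolding Gc_def by (meson cong_mod_left)

lemma Gc_mult:
  assumes "Gc N a c1 m1" "Gc N a c2 m2" "N > 1"
  shows "Gc N a (c1 * c2 mod N^2) (m1 + m2)"
proof -
  obtain w1 where w1: "coprime w1 N" "[w1^a = 1] (mod N)" "[c1 = (1 + m1*N) * w1^nat N] (mod N^2)"
    using assms(1) unfolding Gc_def by blast
  obtain w2 where w2: "coprime w2 N" "[w2^a = 1] (mod N)" "[c2 = (1 + m2*N) * w2^nat N] (mod N^2)"
    using assms(2) unfolding Gc_def by blast
  have "coprime (w1*w2) N" using w1(1) w2(1) by simp
  moreover have "[(w1*w2)^a = 1] (mod N)"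
    using cong_mult[OF w1(2) w2(2)] by (simp add: power_mult_distrib)
  moreover have "[c1 * c2 mod N^2 = (1 + (m1+m2)*N) * (w1*w2)^nat N] (mod N^2)"
  proof -
    have "[c1 * c2 mod N^2 = ((1 + m1*N) * w1^nat N) * ((1 + m2*N) * w2^nat N)] (mod N^2)"
      using cong_mult[OF w1(3) w2(3)] by (simp add: cong_mod_left)
    also have "((1 + m1*N) * w1^nat N) * ((1 + m2*N) * w2^nat N)
       = (1 + (m1+m2)*N) * (w1*w2)^nat N + (m1*m2*(w1*w2)^nat N) * N^2"
      by (simp add: algebra_simps power2_eq_square power_mult_distrib)
    also have "[\<dots> = (1 + (m1+m2)*N) * (w1*w2)^nat N] (mod N^2)"
      unfolding cong_iff_dvd_diff by simp
    finally show ?thesis .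
  qed
  ultimately show ?thesis unfolding Gc_def by blast
qed

lemma Gc_pow:
  assumes "Gc N a c m" "N > 1"
  shows "Gc N a (c ^ k mod N^2) (int k * m)"
proof (induction k)
  case 0
  have "Gc N a 1 0" unfolding Gc_def
    by (rule exI[of _ 1]) simp
  then show ?case using Gc_mod by fastforce
next
  case (Suc k)
  have "Gc N a ((c ^ k mod N^2) * c mod N^2) (int k * m + m)"
    by (rule Gc_mult[OF Suc assms])
  moreover have "(c ^ k mod N^2) * c mod N^2 = c ^ Suc k mod N^2"
    by (metis mod_mult_left_eq power_Suc2)
  moreover have "int k * m + m = int (Suc k) * m" by (simp add: algebra_simps)
  ultimately show ?case by simp
qed

lemma inv_unique:
  fixes c X M :: int
  assumes "coprime c M" "[c * X = 1] (mod M)" "M > 1"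
  shows "[modular_inverse M c = X] (mod M)"
proof -
  have i: "[modular_inverse M c * c = 1] (mod M)"
    using cong_modular_inverse2[of c M] assms(1) by (simp add: coprime_commute)
  have "[modular_inverse M c = modular_inverse M c * (c * X)] (mod M)"
    using cong_mult[OF cong_refl[of "modular_inverse M c"] assms(2)] by (simp add: cong_sym)
  also have "modular_inverse M c * (c * X) = (modular_inverse M c * c) * X" by simp
  also have "[\<dots> = 1 * X] (mod M)" using cong_mult[OF i cong_refl] .
  finally show ?thesis by simp
qed

lemma Gc_inv:
  assumes "Gc N a c m" "N > 1"
  shows "Gc N a (modular_inverse (N^2) c) (- m)"
proof -
  obtain w where w: "coprime w N" "[w^a = 1] (mod N)" "[c = (1 + m*N) * w^nat N] (mod N^2)"
    using assms(1) unfolding Gc_def by blast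
  define v where "v = modular_inverse N w"
  have vw: "[w * v = 1] (mod N)" unfolding v_def
    using cong_modular_inverse1[of w N] w(1) by (simp add: coprime_commute)
  have v1: "coprime v N" unfolding v_def using w(1) by simp
  have "[(w*v)^a = 1] (mod N)" using cong_pow[OF vw, of a] by simp
  hence "[w^a * v^a = 1] (mod N)" by (simp add: power_mult_distrib)
  moreover have "[w^a * v^a = 1 * v^a] (mod N)" using cong_mult[OF w(2) cong_refl] .
  ultimately have v2: "[v^a = 1] (mod N)" by (metis cong_sym cong_trans mult_1)
  have wvN: "[(w*v)^nat N = 1] (mod N^2)" using pow_N_one[OF vw] assms(2) by simp
  have cX: "[c * ((1 - m*N) * v^nat N) = 1] (mod N^2)"
  proof -
    have "[c * ((1 - m*N) * v^nat N) = ((1 + m*N) * w^nat N) * ((1 - m*N) * v^nat N)] (mod N^2)"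
      using cong_mult[OF w(3) cong_refl] .
    also have "((1 + m*N) * w^nat N) * ((1 - m*N) * v^nat N) = (w*v)^nat N - (m*m*(w*v)^nat N) * N^2"
      by (simp add: algebra_simps power2_eq_square power_mult_distrib)
    also have "[\<dots> = (w*v)^nat N] (mod N^2)"
      unfolding cong_iff_dvd_diff by simp
    also have "[(w*v)^nat N = 1] (mod N^2)" by (rule wvN)
    finally show ?thesis .
  qed
  have "[modular_inverse (N^2) c = (1 - m*N) * v^nat N] (mod N^2)"
    by (rule inv_unique[OF Gc_coprime2[OF assms] cX]) (use assms(2) in \<open>simp add: power2_eq_square less_1_mult\<close>)
  hence "[modular_inverse (N^2) c = (1 + (-m)*N) * v^nat N] (mod N^2)" by simp
  thus ?thesis unfolding Gc_def using v1 v2 by blast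
qed

lemma Gc_zpow:
  assumes "Gc N a c m" "N > 1"
  shows "Gc N a (zpow_mod (N^2) c e) (e * m)"
proof (cases "e \<ge> 0")
  case True
  then show ?thesis unfolding zpow_mod_def using Gc_pow[OF assms, of "nat e"] by simp
next
  case False
  have "Gc N a (modular_inverse (N^2) c ^ nat (-e) mod N^2) (int (nat (-e)) * (-m))"
    using Gc_pow[OF Gc_inv[OF assms] assms(2)] .
  then show ?thesis unfolding zpow_mod_def using False by simp
qed

lemma Gc_pow_a:
  assumes "Gc N a c m" "N > 1"
  shows "[c^a = 1 + int a*m*N] (mod N^2)"
proof -
  obtain w where w: "coprime w N" "[w^a = 1] (mod N)" "[c = (1 + m*N) * w^nat N] (mod N^2)"
    using assms(1) unfolding Gc_def by blast
  have "[c^a = ((1 + m*N) * w^nat N)^a] (mod N^2)" using cong_pow[OF w(3)] .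
  also have "((1 + m*N) * w^nat N)^a = (1 + m*N)^a * (w^a)^nat N"
    by (simp add: power_mult_distrib flip: power_mult) (simp add: mult.commute)
  also have "[(1 + m*N)^a * (w^a)^nat N = (1 + int a*m*N) * 1] (mod N^2)"
    using cong_mult[OF pow_lin[of m N a] pow_N_one[OF w(2)]] assms(2) by (simp add: mult.assoc)
  finally show ?thesis by simp
qed

lemma zpow_shift:
  fixes c M e :: int
  assumes "coprime c M" "M > 1"
  shows "[zpow_mod M c (e + int a) = zpow_mod M c e * c^a] (mod M)"
proof -
  define i where "i = modular_inverse M c"
  have ic: "[i * c = 1] (mod M)" unfolding i_def
    using cong_modular_inverse2[of c M] assms(1) by (simp add: coprime_commute)
  have ick: "[i^k * c^k = 1] (mod M)" for k
    using cong_pow[OF ic, of k] by (simp add: power_mult_distrib)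
  show ?thesis
  proof (cases "e \<ge> 0")
    case True
    have "nat (e + int a) = nat e + a" using True by simp
    then show ?thesis unfolding zpow_mod_def using True
      by (simp add: power_add cong_def mod_mult_left_eq)
  next
    case False
    show ?thesis
    proof (cases "e + int a \<ge> 0")
      case True
      have a: "a = nat (-e) + nat (e + int a)" using True False by simp
      have "[i ^ nat (-e) mod M * c^a = i ^ nat (-e) * c^a] (mod M)"
        by (simp add: cong_def mod_mult_left_eq)
      also have "i ^ nat (-e) * c^a = (i ^ nat (-e) * c ^ nat (-e)) * c ^ nat (e + int a)"
        by (subst a) (simp add: power_add mult.assoc)
      also have "[\<dots> = 1 * c ^ nat (e + int a)] (mod M)" by (rule cong_mult[OF ick cong_refl])
      finally have "[i ^ nat (-e) mod M * c^a = c ^ nat (e + int a) mod M] (mod M)"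
        by (simp add: cong_def)
      then show ?thesis unfolding zpow_mod_def using True False i_def by (simp add: cong_sym)
    next
      case T2: False
      have a: "nat (-e) = nat (-(e + int a)) + a" using T2 False by simp
      have "[i ^ nat (-e) mod M * c^a = i ^ nat (-e) * c^a] (mod M)"
        by (simp add: cong_def mod_mult_left_eq)
      also have "i ^ nat (-e) * c^a = i ^ nat (-(e + int a)) * (i ^ a * c ^ a)"
        by (subst a) (simp add: power_add mult.assoc)
      also have "[\<dots> = i ^ nat (-(e + int a)) * 1] (mod M)" by (rule cong_mult[OF cong_refl ick])
      finally have "[i ^ nat (-e) mod M * c^a = i ^ nat (-(e + int a)) mod M] (mod M)"
        by (simp add: cong_def)
      then show ?thesis unfolding zpow_mod_def using T2 False i_def by (simp add: cong_sym)
    qed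
  qed
qed

lemma DDLog_shift:
  fixes N g0 g1 k :: int
  assumes "N > 1" "coprime g0 N" "[g1 = g0 * (1 + k*N)] (mod N^2)"
  shows "[DDLog N g1 = DDLog N g0 + k] (mod N)"
proof -
  define A where "A = g0 mod N"
  define B where "B = g0 div N"
  define A' where "A' = g1 mod N"
  define B' where "B' = g1 div N"
  have g0: "g0 = A + B*N" unfolding A_def B_def by simp
  have g1: "g1 = A' + B'*N" unfolding A'_def B'_def by simp
  have "[g1 = g0] (mod N)"
  proof -
    have "[g1 = g0 * (1 + k*N)] (mod N)" using cong_sq_to_N[OF assms(3)] .
    moreover have "[g0 * (1 + k*N) = g0] (mod N)" unfolding cong_iff_dvd_diff
      by (simp add: algebra_simps)
    ultimately show ?thesis by (rule cong_trans)
  qed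
  hence AA: "A' = A" unfolding A_def A'_def cong_def .
  have "N^2 dvd g1 - g0 * (1 + k*N)" using assms(3) by (simp add: cong_iff_dvd_diff)
  moreover have "g1 - g0 * (1 + k*N) = (B' - B - A*k) * N - (B*k) * N^2"
    unfolding g1 g0 AA by (simp add: algebra_simps power2_eq_square)
  ultimately have "N^2 dvd (B' - B - A*k) * N"
    by (metis dvd_add_left_iff dvd_triv_right diff_add_cancel)
  hence "N * N dvd (B' - B - A*k) * N" by (simp add: power2_eq_square)
  hence "N dvd B' - B - A*k" using assms(1) by simp
  hence BB: "[B' = B + A*k] (mod N)" by (simp add: cong_iff_dvd_diff algebra_simps)
  define I where "I = modular_inverse N A"
  have cA: "coprime A N" unfolding A_def using assms(1,2) by (simp add: coprime_mod_left_iff)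
  have AI: "[A * I = 1] (mod N)" unfolding I_def using cong_modular_inverse1[OF cA] .
  have "DDLog N g1 = (B' * I) mod N" unfolding DDLog_def B'_def I_def A'_def[symmetric] AA ..
  moreover have "DDLog N g0 = (B * I) mod N" unfolding DDLog_def B_def I_def A_def ..
  moreover have "[B' * I = B * I + k] (mod N)"
  proof -
    have "[B' * I = (B + A*k) * I] (mod N)" using cong_mult[OF BB cong_refl] .
    also have "(B + A*k) * I = B * I + (A * I) * k" by (simp add: algebra_simps)
    also have "[\<dots> = B * I + 1 * k] (mod N)" by (rule cong_add[OF cong_refl cong_mult[OF AI cong_refl]])
    finally show ?thesis by simp
  qed
  ultimately show ?thesis by (simp add: cong_def mod_add_left_eq)
qed

lemma Gc_dec:
  fixes N alpha c m :: int
  assumes "Gc N (nat (2*alpha)) c m" "N > 1" "alpha > 0" "coprime (2*alpha) N" "0 \<le> m" "m < N"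
  shows "fp_dec N alpha c = m"
proof -
  define u where "u = c ^ nat (2*alpha) mod N^2"
  define r where "r = (2*alpha*m) mod N"
  have cu: "[u = 1 + 2*alpha*m*N] (mod N^2)" unfolding u_def
    using Gc_pow_a[OF assms(1,2)] assms(3) by (simp add: cong_mod_left)
  have "[1 + 2*alpha*m*N = 1 + r*N] (mod N^2)"
  proof -
    have "N dvd 2*alpha*m - r" unfolding r_def by (simp add: mod_0_imp_dvd minus_mod_eq_mult_div)
    then obtain t where "2*alpha*m - r = N*t" by (auto simp: dvd_def)
    hence "(1 + 2*alpha*m*N) - (1 + r*N) = t * N^2" by (simp add: algebra_simps power2_eq_square)
    thus ?thesis unfolding cong_iff_dvd_diff by simp
  qed
  with cu have cu2: "[u = 1 + r*N] (mod N^2)" by (rule cong_trans)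
  have r0: "0 \<le> r" "r < N" unfolding r_def using assms(2) by auto
  have "1 + r*N < N^2"
  proof -
    have "r * N \<le> (N - 1) * N" using r0 assms(2) by (intro mult_right_mono) auto
    thus ?thesis using assms(2) by (simp add: power2_eq_square algebra_simps)
  qed
  moreover have "0 \<le> 1 + r*N" using r0 assms(2) by simp
  moreover have "0 \<le> u" "u < N^2" unfolding u_def using assms(2) by auto
  ultimately have u: "u = 1 + r*N" using cu2 unfolding cong_def by simp
  have L: "fp_L N u = r" unfolding fp_L_def u using assms(2) by simp
  have "fp_dec N alpha c = (r * modular_inverse N (2*alpha)) mod N"
    unfolding fp_dec_def u_def[symmetric] L ..
  also have "\<dots> = (2*alpha*m * modular_inverse N (2*alpha)) mod N"
    unfolding r_def by (simp add: mod_mult_left_eq)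
  also have "\<dots> = m mod N"
  proof -
    have "[2*alpha * modular_inverse N (2*alpha) = 1] (mod N)"
      using cong_modular_inverse1[OF assms(4)] .
    hence "[(2*alpha * modular_inverse N (2*alpha)) * m = 1 * m] (mod N)" by (rule cong_mult[OF _ cong_refl])
    thus ?thesis unfolding cong_def by (simp add: algebra_simps)
  qed
  also have "\<dots> = m" using assms(5,6) by simp
  finally show ?thesis .
qed

lemma Gc_enc:
  fixes N h m r :: int
  assumes "N > 1" "coprime h N" "[h^a = 1] (mod N)"
  shows "Gc N a (fp_enc N h m r) m"
proof -
  define w where "w = h ^ nat r mod N"
  have w1: "coprime w N" unfolding w_def using assms(1,2) by (simp add: coprime_mod_left_iff)
  have "[w^a = (h^nat r)^a] (mod N)" unfolding w_def by (simp add: cong_def power_mod)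
  also have "(h^nat r)^a = (h^a)^nat r" by (simp flip: power_mult add: mult.commute)
  also have "[\<dots> = 1^nat r] (mod N)" by (rule cong_pow[OF assms(3)])
  finally have w2: "[w^a = 1] (mod N)" by simp
  have "[(1+N)^nat (m mod N) = 1 + int (nat (m mod N)) * 1 * N] (mod N^2)"
    using pow_lin[of 1 N "nat (m mod N)"] by simp
  moreover have "[1 + int (nat (m mod N)) * 1 * N = 1 + m * N] (mod N^2)"
  proof -
    have e: "int (nat (m mod N)) = m mod N" using assms(1) by simp
    define q where "q = m div N"
    define s where "s = m mod N"
    have m: "m = q*N + s" unfolding q_def s_def by simp
    have "(1 + int (nat (m mod N)) * 1 * N) - (1 + m * N) = (s - m) * N" unfolding e s_def by (simp add: algebra_simps)
    also have "\<dots> = (-q) * N^2" unfolding m by (simp add: algebra_simps power2_eq_square)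
    finally have "(1 + int (nat (m mod N)) * 1 * N) - (1 + m * N) = (-q) * N^2" .
    thus ?thesis unfolding cong_iff_dvd_diff by simp
  qed
  ultimately have "[(1+N)^nat (m mod N) = 1 + m * N] (mod N^2)" by (rule cong_trans)
  hence "[fp_enc N h m r = (1 + m*N) * w^nat N] (mod N^2)"
    unfolding fp_enc_def w_def[symmetric] by (simp add: cong_mod_left cong_mult)
  thus ?thesis unfolding Gc_def using w1 w2 by blast
qed

lemma d_value:
  fixes N D t s0 s1 r2 :: int
  assumes "N > 1" "Gc N a D t" "s1 = s0 + int a"
  shows "(DDLog N (zpow_mod (N^2) D s1) - (DDLog N (zpow_mod (N^2) D s0) - r2)) mod N
         = (int a * t + r2) mod N"
proof -
  define g0 where "g0 = zpow_mod (N^2) D s0"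
  define g1 where "g1 = zpow_mod (N^2) D s1"
  have N2: "N^2 > 1" using assms(1) by (simp add: power2_eq_square less_1_mult)
  have cD: "coprime D (N^2)" using Gc_coprime2[OF assms(2,1)] .
  have "[g1 = g0 * D^a] (mod N^2)" unfolding g1_def g0_def assms(3) by (rule zpow_shift[OF cD N2])
  also have "[g0 * D^a = g0 * (1 + (int a * t) * N)] (mod N^2)"
    using cong_mult[OF cong_refl Gc_pow_a[OF assms(2,1)]] by (simp add: mult.assoc)
  finally have c: "[g1 = g0 * (1 + (int a * t) * N)] (mod N^2)" .
  have cg0: "coprime g0 N" unfolding g0_def using Gc_coprime[OF Gc_zpow[OF assms(2,1)] assms(1)] .
  have dd: "[DDLog N g1 = DDLog N g0 + int a * t] (mod N)" by (rule DDLog_shift[OF assms(1) cg0 c])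
  have "[DDLog N g1 - (DDLog N g0 - r2) = int a * t + r2] (mod N)"
  proof -
    have eq: "DDLog N g1 - (DDLog N g0 - r2) = DDLog N g1 + (r2 - DDLog N g0)" by simp
    have eq2: "DDLog N g0 + int a * t + (r2 - DDLog N g0) = int a * t + r2" by simp
    show ?thesis unfolding eq using cong_add[OF dd cong_refl[of "r2 - DDLog N g0"]] unfolding eq2 .
  qed
  thus ?thesis unfolding g0_def g1_def cong_def by simp
qed

lemma sign_lemma:
  fixes E r1 r2 N :: int
  assumes "2 * (\<bar>E\<bar> + r1) < N" "2 * r2 \<le> N" "2 * (r1 + r2) > N" "r1 \<ge> 1"
    "E \<ge> r1 \<or> E \<le> 0"
  shows "(2 * ((E + r2) mod N) > N) = (E > 0)"
proof (cases "E > 0")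
  case True
  hence "E \<ge> r1" using assms(5) by auto
  hence "0 \<le> E + r2" "E + r2 < N" using assms True by auto
  hence "(E + r2) mod N = E + r2" by simp
  then show ?thesis using True \<open>E \<ge> r1\<close> assms by auto
next
  case False
  hence "0 \<le> E + r2" "E + r2 < N" using assms by auto
  hence "(E + r2) mod N = E + r2" by simp
  then show ?thesis using False assms by auto
qed

lemma protocol:
  fixes N cx cy c0 c1 s0 s1 x y r2 :: int and r1 pi :: nat
  assumes N: "N > 1" and G: "Gc N a cx x" "Gc N a cy y" "Gc N a c0 0" "Gc N a c1 1"
    and s: "s1 = s0 + int a" and a: "a \<ge> 1" and pi: "pi \<in> {0,1}"
    and r: "r1 \<ge> 1" "2 * r2 \<le> N" "2 * (int r1 + r2) > N"
    and bnd: "2 * (\<bar>int a * (int r1 * (x - y + 1))\<bar> + int r1) < N"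
             "2 * (\<bar>int a * (int r1 * (y - x))\<bar> + int r1) < N"
  shows "Gc N a (scmp_hss N c0 c1 s0 s1 cx cy r1 r2 pi) (if x \<ge> y then 0 else 1)"
proof (cases "pi = 0")
  case True
  define D where "D = ((cx * modular_inverse (N^2) cy mod N^2) * c1 mod N^2) ^ r1 mod N^2"
  have GD: "Gc N a D (int r1 * (x + - y + 1))" unfolding D_def
    by (intro Gc_pow Gc_mult Gc_inv G N)
  define E where "E = int a * (int r1 * (x - y + 1))"
  have dv: "(DDLog N (zpow_mod (N^2) D s1) - (DDLog N (zpow_mod (N^2) D s0) - r2)) mod N
         = (E + r2) mod N" using d_value[OF N GD s] unfolding E_def by simp
  have Epos: "E \<ge> int r1 \<or> E \<le> 0"
  proof (cases "x - y + 1 \<ge> 1")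
    case True
    have "int a * (int r1 * (x - y + 1)) \<ge> 1 * (int r1 * 1)"
      using True a r by (intro mult_mono) auto
    then show ?thesis unfolding E_def by simp
  next
    case False
    hence "x - y + 1 \<le> 0" by simp
    hence "int r1 * (x - y + 1) \<le> 0" by (simp add: mult_nonneg_nonpos)
    then show ?thesis unfolding E_def by (simp add: mult_nonneg_nonpos)
  qed
  have Esign: "(E > 0) = (x \<ge> y)"
  proof
    assume "E > 0" thus "x \<ge> y" unfolding E_def using zero_less_mult_iff a r
      by (smt (verit, best) of_nat_0_le_iff)
  next
    assume "x \<ge> y" thus "E > 0" unfolding E_def using a r by simp
  qed
  have sg: "(2 * ((E + r2) mod N) > N) = (x \<ge> y)"
    using sign_lemma[OF _ r(2) r(3) _ Epos] bnd(1) r(1) Esign unfolding E_def by simp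
  have "scmp_hss N c0 c1 s0 s1 cx cy r1 r2 pi = (if x \<ge> y then c0 else c1) * c0 mod N^2"
    unfolding scmp_hss_def Let_def using True dv sg by (simp add: D_def)
  moreover have "Gc N a ((if x \<ge> y then c0 else c1) * c0 mod N^2) ((if x \<ge> y then 0 else 1) + 0)"
    by (intro Gc_mult G N) (auto intro: G)
  ultimately show ?thesis by simp
next
  case False
  hence pi1: "pi = 1" using pi by auto
  define D where "D = (cy * modular_inverse (N^2) cx mod N^2) ^ r1 mod N^2"
  have GD: "Gc N a D (int r1 * (y + - x))" unfolding D_def
    by (intro Gc_pow Gc_mult Gc_inv G N)
  define E where "E = int a * (int r1 * (y - x))"
  have dv: "(DDLog N (zpow_mod (N^2) D s1) - (DDLog N (zpow_mod (N^2) D s0) - r2)) mod N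
         = (E + r2) mod N" using d_value[OF N GD s] unfolding E_def by simp
  have Epos: "E \<ge> int r1 \<or> E \<le> 0"
  proof (cases "y - x \<ge> 1")
    case True
    have "int a * (int r1 * (y - x)) \<ge> 1 * (int r1 * 1)"
      using True a r by (intro mult_mono) auto
    then show ?thesis unfolding E_def by simp
  next
    case False
    hence "y - x \<le> 0" by simp
    hence "int r1 * (y - x) \<le> 0" by (simp add: mult_nonneg_nonpos)
    then show ?thesis unfolding E_def by (simp add: mult_nonneg_nonpos)
  qed
  have Esign: "(E > 0) = (\<not> x \<ge> y)"
  proof
    assume "E > 0" thus "\<not> x \<ge> y" unfolding E_def using zero_less_mult_iff a r
      by (smt (verit, best) of_nat_0_le_iff)
  next
    assume "\<not> x \<ge> y" thus "E > 0" unfolding E_def using a r by simp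
  qed
  have sg: "(2 * ((E + r2) mod N) > N) = (\<not> x \<ge> y)"
    using sign_lemma[OF _ r(2) r(3) _ Epos] bnd(2) r(1) Esign unfolding E_def by simp
  have "scmp_hss N c0 c1 s0 s1 cx cy r1 r2 pi
        = (c1 * modular_inverse (N^2) (if x \<ge> y then c1 else c0) mod N^2) * c0 mod N^2"
    unfolding scmp_hss_def Let_def using pi1 dv sg by (simp add: D_def)
  moreover have "Gc N a ((c1 * modular_inverse (N^2) (if x \<ge> y then c1 else c0) mod N^2) * c0 mod N^2)
     ((1 + - (if x \<ge> y then 1 else 0)) + 0)"
    by (intro Gc_mult Gc_inv G N) (auto intro: G)
  ultimately show ?thesis by (cases "y \<le> x") auto
qed

lemma bound_lemma:
  fixes p q r1 dl N :: int and \<kappa> l \<sigma> :: nat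
  assumes "0 < p" "p < 2^(2*\<kappa>)" "0 < q" "q < 2^(2*\<kappa>)" "1 \<le> r1" "r1 < 2^\<sigma>"
    "\<bar>dl\<bar> \<le> 2^(l+1) + 1"
    "2 * (2 ^ (l + 1 + \<sigma> + 4 * \<kappa> + 1) + 2 ^ (\<sigma> + 4 * \<kappa> + 1)) < N"
  shows "2 * (\<bar>(2*(p*q)) * (r1 * dl)\<bar> + r1) < N"
proof -
  define K :: int where "K = 2^(4*\<kappa>+1)"
  define Lp :: int where "Lp = 2^(l+1)+1"
  define S :: int where "S = 2^\<sigma>"
  have "p * q < 2^(2*\<kappa>) * 2^(2*\<kappa>)" using assms by (intro mult_strict_mono) auto
  also have "\<dots> = 2^(4*\<kappa>)" by (simp flip: power_add)
  finally have "2*(p*q) + 1 \<le> K" unfolding K_def by simp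
  have Lp1: "1 \<le> Lp" unfolding Lp_def by simp
  have pq0: "0 < 2*(p*q)" using assms by simp
  have "\<bar>(2*(p*q)) * (r1 * dl)\<bar> + r1 = r1 * (2*(p*q) * \<bar>dl\<bar> + 1)"
    using pq0 assms(1,3,5) by (simp add: abs_mult algebra_simps)
  also have "\<dots> \<le> r1 * (K * Lp)"
  proof (rule mult_left_mono)
    have "2*(p*q) * \<bar>dl\<bar> \<le> 2*(p*q) * Lp" using pq0 assms(7) unfolding Lp_def by (intro mult_left_mono) auto
    hence "2*(p*q) * \<bar>dl\<bar> + 1 \<le> (2*(p*q) + 1) * Lp" using Lp1 by (simp add: algebra_simps)
    also have "\<dots> \<le> K * Lp" using \<open>2*(p*q) + 1 \<le> K\<close> Lp1 by (intro mult_right_mono) auto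
    finally show "2*(p*q) * \<bar>dl\<bar> + 1 \<le> K * Lp" .
  qed (use assms in auto)
  also have "\<dots> < S * (K * Lp)"
    using assms(6) Lp1 unfolding S_def K_def by (intro mult_strict_right_mono) auto
  also have "S * (K * Lp) = 2 ^ (l + 1 + \<sigma> + 4 * \<kappa> + 1) + 2 ^ (\<sigma> + 4 * \<kappa> + 1)"
    unfolding S_def K_def Lp_def by (simp add: algebra_simps flip: power_add)
  finally show ?thesis using assms(8) by simp
qed

theorem theorem2:
  fixes \<kappa> n l \<sigma> :: nat
    and P Q p q y0 s0 s1 x y rx ry rz ro cx cy c0 c1 r2 :: int
    and r1 pi :: nat
  assumes PQ_prime: "prime P" "prime Q"
    and PQ_bits: "2 ^ (n div 2 - 1) \<le> P" "P < 2 ^ (n div 2)"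
                 "2 ^ (n div 2 - 1) \<le> Q" "Q < 2 ^ (n div 2)"
    and pq_prime: "prime p" "prime q" "odd p" "odd q"
    and pq_bits: "2 ^ (2 * \<kappa> - 1) \<le> p" "p < 2 ^ (2 * \<kappa>)"
                 "2 ^ (2 * \<kappa> - 1) \<le> q" "q < 2 ^ (2 * \<kappa>)"
    and pq_dvd: "p dvd P - 1" "q dvd Q - 1"
    and PQ_mod4: "P mod 4 = 3" "Q mod 4 = 3"
    and gcd_PQ: "gcd (P - 1) (Q - 1) = 2"
    and gcd_beta: "gcd (p * q) ((P - 1) * (Q - 1) div (4 * p * q)) = 1"
    and y0: "y0 \<in> {0..<P * Q}" "coprime y0 (P * Q)"
    and param: "2 * (2 ^ (l + 1 + \<sigma> + 4 * \<kappa> + 1) + 2 ^ (\<sigma> + 4 * \<kappa> + 1)) < P * Q"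
    and shares: "s1 - s0 = 2 * (p * q)"
    and rand: "rx \<in> {0..<2 ^ (4 * \<kappa>)}" "ry \<in> {0..<2 ^ (4 * \<kappa>)}"
              "rz \<in> {0..<2 ^ (4 * \<kappa>)}" "ro \<in> {0..<2 ^ (4 * \<kappa>)}"
    and xy: "\<bar>x\<bar> \<le> 2 ^ l" "\<bar>y\<bar> \<le> 2 ^ l"
    and ct: "cx = fp_enc (P * Q) (- (y0 ^ nat (2 * ((P - 1) * (Q - 1) div (4 * p * q)))) mod (P * Q)) x rx"
            "cy = fp_enc (P * Q) (- (y0 ^ nat (2 * ((P - 1) * (Q - 1) div (4 * p * q)))) mod (P * Q)) y ry"
            "c0 = fp_enc (P * Q) (- (y0 ^ nat (2 * ((P - 1) * (Q - 1) div (4 * p * q)))) mod (P * Q)) 0 rz"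
            "c1 = fp_enc (P * Q) (- (y0 ^ nat (2 * ((P - 1) * (Q - 1) div (4 * p * q)))) mod (P * Q)) 1 ro"
    and r1: "1 \<le> r1" "r1 \<le> 2 ^ \<sigma> - 1"
    and r2: "2 * r2 \<le> P * Q" "2 * (int r1 + r2) > P * Q"
    and pi: "pi \<in> {0, 1}"
  shows "fp_dec (P * Q) (p * q) (scmp_hss (P * Q) c0 c1 s0 s1 cx cy r1 r2 pi)
           = (if x \<ge> y then 0 else 1)"
proof -
  define N where "N = P * Q"
  define B where "B = (P - 1) * (Q - 1) div (4 * p * q)"
  define h where "h = - (y0 ^ nat (2 * B)) mod N"
  define a where "a = nat (2 * (p * q))"
  have P1: "P > 1" "Q > 1" using PQ_prime prime_gt_1_int by auto
  have p1: "p > 1" "q > 1" using pq_prime prime_gt_1_int by auto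
  have N1: "N > 1" unfolding N_def using P1 by (simp add: less_1_mult)
  have pq1: "1 < p * q" using p1 by (simp add: less_1_mult)
  have a1: "a \<ge> 1" unfolding a_def using pq1 by simp
  have ia: "int a = 2 * (p * q)" unfolding a_def using p1 by simp
  have ka: "\<kappa> \<ge> 1"
  proof (rule ccontr)
    assume "\<not> \<kappa> \<ge> 1" hence "\<kappa> = 0" by simp
    thus False using pq_bits(2) p1 by simp
  qed
  have pow2: "(2::int) ^ (2 * \<kappa>) = 2 * 2 ^ (2 * \<kappa> - 1)"
  proof -
    have "2 * \<kappa> = Suc (2 * \<kappa> - 1)" using ka by simp
    hence "(2::int) ^ (2 * \<kappa>) = 2 ^ Suc (2 * \<kappa> - 1)" by metis
    thus ?thesis by simp
  qed
  have PneQ: "P \<noteq> Q"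
  proof
    assume "P = Q"
    hence "P - 1 = 2" using gcd_PQ P1 by simp
    hence "p dvd 2" using pq_dvd by simp
    hence "p \<le> 2" using p1 by (simp add: zdvd_imp_le)
    hence "p = 2" using p1 by simp
    thus False using pq_prime(3) by simp
  qed
  have cPQ: "coprime P Q" using primes_coprime[OF PQ_prime PneQ] .
  have two_dvd: "2 dvd P - 1" "2 dvd Q - 1" using PQ_mod4 by presburger+
  have c2p: "coprime 2 p" "coprime 2 q" using pq_prime(3,4) by simp_all
  have dP: "2 * p dvd P - 1" by (rule divides_mult[OF two_dvd(1) pq_dvd(1) c2p(1)])
  have dQ: "2 * q dvd Q - 1" by (rule divides_mult[OF two_dvd(2) pq_dvd(2) c2p(2)])
  have d4: "4 * p * q dvd (P - 1) * (Q - 1)"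
    using mult_dvd_mono[OF dP dQ] by (simp add: algebra_simps)
  have B4: "B * (4 * p * q) = (P - 1) * (Q - 1)" unfolding B_def using d4 by simp
  have B0: "B \<ge> 0" unfolding B_def using P1 p1 by (simp add: pos_imp_zdiv_nonneg_iff)
  have cpP: "coprime p P"
  proof (rule prime_imp_coprime[OF pq_prime(1)])
    show "\<not> p dvd P"
    proof
      assume "p dvd P"
      hence "p dvd P - (P - 1)" using pq_dvd(1) by (rule dvd_diff)
      thus False using p1 by simp
    qed
  qed
  have cqQ: "coprime q Q"
  proof (rule prime_imp_coprime[OF pq_prime(2)])
    show "\<not> q dvd Q"
    proof
      assume "q dvd Q"
      hence "q dvd Q - (Q - 1)" using pq_dvd(2) by (rule dvd_diff)
      thus False using p1 by simp
    qed
  qed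
  have cpQ: "coprime p Q"
  proof (rule prime_imp_coprime[OF pq_prime(1)])
    show "\<not> p dvd Q"
    proof
      assume "p dvd Q"
      hence "p = Q" using primes_dvd_imp_eq[OF pq_prime(1) PQ_prime(2)] by simp
      moreover have "2 * q \<le> Q - 1" using zdvd_imp_le[OF dQ] P1 by simp
      ultimately have "2 * q \<le> p - 1" by simp
      thus False using pq_bits pow2 by simp
    qed
  qed
  have cqP: "coprime q P"
  proof (rule prime_imp_coprime[OF pq_prime(2)])
    show "\<not> q dvd P"
    proof
      assume "q dvd P"
      hence "q = P" using primes_dvd_imp_eq[OF pq_prime(2) PQ_prime(1)] by simp
      moreover have "2 * p \<le> P - 1" using zdvd_imp_le[OF dP] P1 by simp
      ultimately have "2 * p \<le> q - 1" by simp
      thus False using pq_bits pow2 by simp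
    qed
  qed
  have c2N: "coprime 2 N" unfolding N_def using PQ_mod4 by (simp add: coprime_mult_right_iff) presburger
  have cA: "coprime (2 * (p * q)) N"
    using c2N cpP cpQ cqP cqQ unfolding N_def by (simp add: coprime_mult_right_iff coprime_mult_left_iff)
  have cy0: "coprime y0 N" using y0(2) unfolding N_def .
  have ch: "coprime h N" unfolding h_def using cy0 N1 by (simp add: coprime_mod_left_iff)
  have ha: "[h ^ a = 1] (mod N)"
  proof -
    have ev: "even a" unfolding a_def using p1 by (simp add: even_nat_iff)
    have "[h ^ a = (- (y0 ^ nat (2 * B))) ^ a] (mod N)" unfolding h_def by (simp add: cong_def power_mod)
    also have "(- (y0 ^ nat (2 * B))) ^ a = y0 ^ (nat (2 * B) * a)"
      using ev by (simp add: power_mult)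
    also have "nat (2 * B) * a = nat (P - 1) * nat (Q - 1)"
    proof -
      have "nat (2 * B) * a = nat (2 * B * (2 * (p * q)))" unfolding a_def using B0 p1 by (simp add: nat_mult_distrib)
      also have "2 * B * (2 * (p * q)) = (P - 1) * (Q - 1)" using B4 by (simp add: algebra_simps)
      finally show ?thesis using P1 by (simp add: nat_mult_distrib)
    qed
    also have "[y0 ^ (nat (P - 1) * nat (Q - 1)) = 1] (mod N)"
      unfolding N_def
    proof (rule coprime_cong_mult[OF _ _ cPQ])
      have "coprime y0 P" using cy0 unfolding N_def by simp
      from cong_pow[OF fermat_int[OF PQ_prime(1) this], of "nat (Q - 1)"]
      show "[y0 ^ (nat (P - 1) * nat (Q - 1)) = 1] (mod P)" by (simp add: power_mult)
      have "coprime y0 Q" using cy0 unfolding N_def by simp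
      from cong_pow[OF fermat_int[OF PQ_prime(2) this], of "nat (P - 1)"]
      have "[y0 ^ (nat (Q - 1) * nat (P - 1)) = 1] (mod Q)" by (simp add: power_mult)
      thus "[y0 ^ (nat (P - 1) * nat (Q - 1)) = 1] (mod Q)" by (simp only: mult.commute)
    qed
    finally show ?thesis .
  qed
  have hdef: "- (y0 ^ nat (2 * ((P - 1) * (Q - 1) div (4 * p * q)))) mod N = h"
    unfolding h_def B_def ..
  have Gx: "Gc N a cx x" unfolding ct N_def[symmetric] hdef by (rule Gc_enc[OF N1 ch ha])
  have Gy: "Gc N a cy y" unfolding ct N_def[symmetric] hdef by (rule Gc_enc[OF N1 ch ha])
  have G0: "Gc N a c0 0" unfolding ct N_def[symmetric] hdef by (rule Gc_enc[OF N1 ch ha])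
  have G1: "Gc N a c1 1" unfolding ct N_def[symmetric] hdef by (rule Gc_enc[OF N1 ch ha])
  have s: "s1 = s0 + int a" using shares ia by simp
  have r1i: "1 \<le> int r1" "int r1 < 2 ^ \<sigma>"
  proof -
    show "1 \<le> int r1" using r1 by simp
    have "r1 < 2 ^ \<sigma>" using r1 by linarith
    hence "int r1 < int (2 ^ \<sigma>)" by (simp only: of_nat_less_iff)
    thus "int r1 < 2 ^ \<sigma>" by simp
  qed
  have pos: "0 < p" "0 < q" using p1 by auto
  have l2: "(2::int)^(l+1) = 2*2^l" by simp
  have dl1: "\<bar>x - y + 1\<bar> \<le> 2^(l+1) + 1" unfolding l2 using xy unfolding abs_le_iff by linarith
  have dl2: "\<bar>y - x\<bar> \<le> 2^(l+1) + 1" unfolding l2 using xy unfolding abs_le_iff by linarith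
  have prm: "2 * (2 ^ (l + 1 + \<sigma> + 4 * \<kappa> + 1) + 2 ^ (\<sigma> + 4 * \<kappa> + 1)) < N" using param unfolding N_def .
  have bnd1: "2 * (\<bar>int a * (int r1 * (x - y + 1))\<bar> + int r1) < N"
    unfolding ia by (rule bound_lemma[OF pos(1) pq_bits(2) pos(2) pq_bits(4) r1i dl1 prm])
  have bnd2: "2 * (\<bar>int a * (int r1 * (y - x))\<bar> + int r1) < N"
    unfolding ia by (rule bound_lemma[OF pos(1) pq_bits(2) pos(2) pq_bits(4) r1i dl2 prm])
  have r2': "2 * r2 \<le> N" "2 * (int r1 + r2) > N" using r2 unfolding N_def by auto
  have Gm: "Gc N a (scmp_hss N c0 c1 s0 s1 cx cy r1 r2 pi) (if x \<ge> y then 0 else 1)"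
    by (rule protocol[OF N1 Gx Gy G0 G1 s a1 pi _ r2' bnd1 bnd2]) (use r1 in simp)
  have Gm': "Gc N (nat (2 * (p * q))) (scmp_hss N c0 c1 s0 s1 cx cy r1 r2 pi) (if x \<ge> y then 0 else 1)"
    using Gm unfolding a_def .
  have "fp_dec N (p * q) (scmp_hss N c0 c1 s0 s1 cx cy r1 r2 pi) = (if x \<ge> y then 0 else 1)"
    by (rule Gc_dec[OF Gm' N1 _ cA]) (use pos N1 in auto)
  thus ?thesis unfolding N_def .
qed

end
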